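(* There exist absolute constants $0<c\le C$ such that for all integers $1\le m\le n$, $$n!\left(\frac{c}{m}\max\Big\{1,\log\frac nm\Big\}\right)^m\le|s(n+1,m+1)|\le n!\left(\frac{C}{m}\max\Big\{1,\log\frac nm\Big\}\right)^m.$$
   Context: $s(a,b)$ denote the Stirling numbers of the first kind, defined by $x(x-1)\cdots(x-a+1)=\sum_{b=1}^{a}s(a,b)x^b$. Logarithms are natural. *)

theory Defs
  imports "HOL-Analysis.Analysis" "HOL-Combinatorics.Stirling"
begin

end

theory Submission imports Defs begin


lemma upper_core:
  fixes t :: real
  assumes "0 \<le> t"
  shows "t ^ m * real (stirling (Suc n) (Suc m)) \<le> (\<Prod>k=1..n. real k + t)"
  using assms
proof (induction n arbitrary: m)
  case 0
  then show ?case by (cases m) auto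
next
  case (Suc n)
  have Q0: "0 \<le> (\<Prod>k=1..n. real k + t)" using Suc.prems by (intro prod_nonneg) auto
  have QS: "(\<Prod>k=1..Suc n. real k + t) = (\<Prod>k=1..n. real k + t) * (real (Suc n) + t)"
    by (simp add: prod.nat_ivl_Suc')
  show ?case
  proof (cases m)
    case 0
    have "real (fact (Suc n)) = (\<Prod>k=1..Suc n. real k)" by (simp add: fact_prod algebra_simps)
    also have "\<dots> \<le> (\<Prod>k=1..Suc n. real k + t)"
      using Suc.prems by (intro prod_mono) auto
    finally show ?thesis using 0 by (simp del: stirling.simps add: stirling_Suc_n_1)
  next
    case (Suc m')
    have h1: "t ^ Suc m' * real (stirling (Suc n) (Suc (Suc m'))) \<le> (\<Prod>k=1..n. real k + t)"
      using Suc.IH Suc.prems by blast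
    have h2: "t ^ m' * real (stirling (Suc n) (Suc m')) \<le> (\<Prod>k=1..n. real k + t)"
      using Suc.IH Suc.prems by blast
    have "t ^ m * real (stirling (Suc (Suc n)) (Suc m))
        = real (Suc n) * (t ^ Suc m' * real (stirling (Suc n) (Suc (Suc m'))))
          + t * (t ^ m' * real (stirling (Suc n) (Suc m')))"
      using Suc by (simp add: algebra_simps)
    also have "\<dots> \<le> real (Suc n) * (\<Prod>k=1..n. real k + t) + t * (\<Prod>k=1..n. real k + t)"
      using h1 h2 Suc.prems by (intro add_mono mult_left_mono) auto
    also have "\<dots> = (\<Prod>k=1..Suc n. real k + t)" by (simp add: QS algebra_simps)
    finally show ?thesis .
  qed
qed

lemma Q_exp:
  fixes t :: real
  assumes "0 \<le> t"
  shows "(\<Prod>k=1..n. real k + t) \<le> fact n * exp (t * harm n)"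
proof (induction n)
  case 0
  then show ?case by (simp add: harm_def)
next
  case (Suc n)
  have QS: "(\<Prod>k=1..Suc n. real k + t) = (\<Prod>k=1..n. real k + t) * (real (Suc n) + t)"
    by (simp add: prod.nat_ivl_Suc')
  have Q0: "0 \<le> (\<Prod>k=1..n. real k + t)" using assms by (intro prod_nonneg) auto
  have e: "real (Suc n) + t \<le> real (Suc n) * exp (t / real (Suc n))"
  proof -
    have "1 + t / real (Suc n) \<le> exp (t / real (Suc n))" by (rule exp_ge_add_one_self)
    hence "real (Suc n) * (1 + t / real (Suc n)) \<le> real (Suc n) * exp (t / real (Suc n))"
      by (intro mult_left_mono) auto
    moreover have "real (Suc n) * (1 + t / real (Suc n)) = real (Suc n) + t"
      by (simp add: field_simps)
    ultimately show ?thesis by metis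
  qed
  have "(\<Prod>k=1..Suc n. real k + t) \<le> (fact n * exp (t * harm n)) * (real (Suc n) * exp (t / real (Suc n)))"
    unfolding QS using Suc.IH e Q0 assms by (intro mult_mono) auto
  also have "\<dots> = fact (Suc n) * exp (t * harm (Suc n))"
    by (simp add: harm_Suc exp_add[symmetric] algebra_simps divide_inverse)
  finally show ?case .
qed

lemma Q_fact:
  "(\<Prod>k=1..n. real k + real s) * fact s = fact (n + s)"
proof (induction n)
  case 0 then show ?case by simp
next
  case (Suc n)
  have "(\<Prod>k=1..Suc n. real k + real s) = (\<Prod>k=1..n. real k + real s) * (real (Suc n) + real s)"
    by (simp add: prod.nat_ivl_Suc')
  moreover have "(fact (Suc n + s) :: real) = real (Suc n + s) * fact (n + s)"
    by (metis add_Suc fact_Suc of_nat_fact)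
  ultimately show ?case using Suc
    by (metis (no_types, lifting) mult.assoc mult.commute of_nat_add)
qed

lemma fact_add_le: "(fact (n + s) :: real) \<le> fact n * (real n + real s) ^ s"
proof (induction s)
  case 0 then show ?case by simp
next
  case (Suc s)
  have "(fact (n + Suc s) :: real) = real (n + s + 1) * fact (n + s)" by simp
  also have "\<dots> \<le> real (n + s + 1) * (fact n * (real n + real s) ^ s)"
    using Suc by (intro mult_left_mono) auto
  also have "\<dots> \<le> real (n + s + 1) * (fact n * (real n + real (Suc s)) ^ s)"
    by (intro mult_left_mono power_mono) auto
  also have "\<dots> = fact n * (real n + real (Suc s)) ^ Suc s" by (simp add: algebra_simps)
  finally show ?case .
qed

lemma pow_le_exp_fact: "(real s) ^ s \<le> exp (real s) * fact s"
proof (induction s)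
  case 0 then show ?case by simp
next
  case (Suc s)
  show ?case
  proof (cases "s = 0")
    case True then show ?thesis using exp_ge_add_one_self[of 1] by simp
  next
    case False
    have b: "(1 + 1 / real s) ^ s \<le> exp 1"
    proof -
      have "(1 + 1 / real s) ^ s \<le> exp (1 / real s) ^ s"
        by (intro power_mono exp_ge_add_one_self) auto
      also have "\<dots> = exp 1" using False by (simp add: exp_of_nat_mult[symmetric])
      finally show ?thesis .
    qed
    have "(real (Suc s)) ^ s = (real s) ^ s * (1 + 1 / real s) ^ s"
      using False by (simp add: power_mult_distrib[symmetric] field_simps)
    also have "\<dots> \<le> (exp (real s) * fact s) * exp 1"
      using Suc b by (intro mult_mono) auto
    finally have "(real (Suc s)) ^ s \<le> exp (real s) * fact s * exp 1" .
    hence "(real (Suc s)) ^ Suc s \<le> real (Suc s) * (exp (real s) * fact s * exp 1)"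
      by (simp add: mult_left_mono)
    also have "\<dots> = exp (real (Suc s)) * fact (Suc s)" by (simp add: exp_add algebra_simps)
    finally show ?thesis .
  qed
qed



definition es :: "nat set \<Rightarrow> nat \<Rightarrow> real" where
  "es A m = (\<Sum>S\<in>{S. S \<subseteq> A \<and> card S = m}. \<Prod>k\<in>S. 1 / real k)"

lemma es_nonneg: "0 \<le> es A m"
  unfolding es_def by (intro sum_nonneg prod_nonneg) auto

lemma es_zero: "finite A \<Longrightarrow> es A 0 = 1"
proof -
  assume "finite A"
  hence "{S. S \<subseteq> A \<and> card S = 0} = {{}}" using finite_subset by fastforce
  thus ?thesis by (simp add: es_def)
qed

lemma es_empty: "es {} (Suc m) = 0"
proof -
  have "{S. S \<subseteq> {} \<and> card S = Suc m} = {}" by auto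
  thus ?thesis by (simp add: es_def)
qed

lemma split_subsets:
  assumes "finite A" "a \<notin> A"
  shows "{S. S \<subseteq> insert a A \<and> card S = Suc m} =
    {S. S \<subseteq> A \<and> card S = Suc m} \<union> insert a ` {S. S \<subseteq> A \<and> card S = m}"
proof (rule set_eqI, rule iffI)
  fix S assume S: "S \<in> {S. S \<subseteq> insert a A \<and> card S = Suc m}"
  show "S \<in> {S. S \<subseteq> A \<and> card S = Suc m} \<union> insert a ` {S. S \<subseteq> A \<and> card S = m}"
  proof (cases "a \<in> S")
    case True
    have fin: "finite S" using S assms finite_subset by auto
    have "S = insert a (S - {a})" using True by auto
    moreover have "card (S - {a}) = m" using S True fin by auto
    moreover have "S - {a} \<subseteq> A" using S by auto
    ultimately show ?thesis by blast
  next
    case False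
    then show ?thesis using S by auto
  qed
next
  fix S assume S: "S \<in> {S. S \<subseteq> A \<and> card S = Suc m} \<union> insert a ` {S. S \<subseteq> A \<and> card S = m}"
  show "S \<in> {S. S \<subseteq> insert a A \<and> card S = Suc m}"
  proof (cases "S \<in> {S. S \<subseteq> A \<and> card S = Suc m}")
    case True then show ?thesis by auto
  next
    case False
    then obtain T where T: "T \<subseteq> A" "card T = m" "S = insert a T" using S by auto
    have "finite T" using T assms finite_subset by auto
    moreover have "a \<notin> T" using T assms by auto
    ultimately show ?thesis using T by auto
  qed
qed

lemma es_insert:
  assumes "finite A" "a \<notin> A"
  shows "es (insert a A) (Suc m) = es A (Suc m) + es A m / real a"
proof -
  have fin1: "finite {S. S \<subseteq> A \<and> card S = Suc m}" using assms by auto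
  have fin2: "finite (insert a ` {S. S \<subseteq> A \<and> card S = m})" using assms by auto
  have disj: "{S. S \<subseteq> A \<and> card S = Suc m} \<inter> insert a ` {S. S \<subseteq> A \<and> card S = m} = {}"
    using assms by auto
  have inj: "inj_on (insert a) {S. S \<subseteq> A \<and> card S = m}"
    using assms by (auto simp: inj_on_def)
  have "es (insert a A) (Suc m) = es A (Suc m) +
      (\<Sum>S\<in>insert a ` {S. S \<subseteq> A \<and> card S = m}. \<Prod>k\<in>S. 1 / real k)"
    unfolding es_def split_subsets[OF assms] by (rule sum.union_disjoint[OF fin1 fin2 disj])
  also have "(\<Sum>S\<in>insert a ` {S. S \<subseteq> A \<and> card S = m}. \<Prod>k\<in>S. 1 / real k)
      = (\<Sum>S\<in>{S. S \<subseteq> A \<and> card S = m}. \<Prod>k\<in>insert a S. 1 / real k)"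
    by (rule sum.reindex[OF inj, unfolded comp_def])
  also have "\<dots> = (\<Sum>S\<in>{S. S \<subseteq> A \<and> card S = m}. (1 / real a) * (\<Prod>k\<in>S. 1 / real k))"
  proof (rule sum.cong[OF refl])
    fix S assume "S \<in> {S. S \<subseteq> A \<and> card S = m}"
    hence "finite S" "a \<notin> S" using assms finite_subset by auto
    thus "(\<Prod>k\<in>insert a S. 1 / real k) = (1 / real a) * (\<Prod>k\<in>S. 1 / real k)" by simp
  qed
  also have "\<dots> = es A m / real a" by (simp add: es_def sum_distrib_left sum_divide_distrib)
  finally show ?thesis .
qed

lemma stirling_es: "real (stirling (Suc n) (Suc m)) = fact n * es {1..n} m"
proof (induction n arbitrary: m)
  case 0
  then show ?case by (cases m) (auto simp: es_zero es_empty)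
next
  case (Suc n)
  show ?case
  proof (cases m)
    case 0
    then show ?thesis by (simp del: stirling.simps add: stirling_Suc_n_1 es_zero algebra_simps)
  next
    case (Suc m')
    have ins: "{1..Suc n} = insert (Suc n) {1..n}" by auto
    have "real (stirling (Suc (Suc n)) (Suc m)) =
        real (Suc n) * real (stirling (Suc n) (Suc (Suc m'))) + real (stirling (Suc n) (Suc m'))"
      using Suc by (simp only: stirling.simps(4) of_nat_add of_nat_mult)
    also have "\<dots> = real (Suc n) * (fact n * es {1..n} (Suc m')) + fact n * es {1..n} m'"
      using Suc.IH by simp
    also have "\<dots> = fact (Suc n) * (es {1..n} (Suc m') + es {1..n} m' / real (Suc n))"
      by (simp add: field_simps)
    also have "\<dots> = fact (Suc n) * es {1..Suc n} m"
      unfolding ins Suc by (subst es_insert) auto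
    finally show ?thesis .
  qed
qed

lemma es_mono: "A \<subseteq> B \<Longrightarrow> finite B \<Longrightarrow> es A m \<le> es B m"
  unfolding es_def
  by (intro sum_mono2) (auto intro!: prod_nonneg finite_subset[of _ "Pow B"])

lemma es_union:
  assumes "finite A" "finite B" "A \<inter> B = {}"
  shows "es A m * (\<Sum>k\<in>B. 1 / real k) \<le> es (A \<union> B) (Suc m)"
proof -
  let ?SA = "{S. S \<subseteq> A \<and> card S = m}"
  let ?f = "\<lambda>p. insert (snd p) (fst p)"
  have finSA: "finite ?SA" using assms by auto
  have inj: "inj_on ?f (?SA \<times> B)"
  proof (rule inj_onI)
    fix p q assume p: "p \<in> ?SA \<times> B" and q: "q \<in> ?SA \<times> B" and eq: "?f p = ?f q"
    have "snd p = snd q" using p q eq assms(3) by (auto simp: insert_eq_iff) (blast+)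
    moreover have "fst p = fst q"
    proof -
      have "fst p = ?f p - {snd p}" using p assms(3) by auto
      also have "\<dots> = ?f q - {snd q}" using eq \<open>snd p = snd q\<close> by simp
      also have "\<dots> = fst q" using q assms(3) by auto
      finally show ?thesis .
    qed
    ultimately show "p = q" by (simp add: prod_eq_iff)
  qed
  have "es A m * (\<Sum>k\<in>B. 1 / real k) = (\<Sum>p\<in>?SA \<times> B. (\<Prod>k\<in>fst p. 1 / real k) * (1 / real (snd p)))"
    unfolding es_def sum_product sum.cartesian_product by (simp add: case_prod_beta)
  also have "\<dots> = (\<Sum>p\<in>?SA \<times> B. \<Prod>k\<in>?f p. 1 / real k)"
  proof (rule sum.cong[OF refl])
    fix p assume p: "p \<in> ?SA \<times> B"
    hence "finite (fst p)" "snd p \<notin> fst p" using assms finite_subset by auto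
    thus "(\<Prod>k\<in>fst p. 1 / real k) * (1 / real (snd p)) = (\<Prod>k\<in>?f p. 1 / real k)" by simp
  qed
  also have "\<dots> = (\<Sum>S\<in>?f ` (?SA \<times> B). \<Prod>k\<in>S. 1 / real k)"
    by (rule sum.reindex[OF inj, unfolded comp_def, symmetric])
  also have "\<dots> \<le> (\<Sum>S\<in>{S. S \<subseteq> A \<union> B \<and> card S = Suc m}. \<Prod>k\<in>S. 1 / real k)"
  proof (rule sum_mono2)
    show "finite {S. S \<subseteq> A \<union> B \<and> card S = Suc m}" using assms by auto
    show "?f ` (?SA \<times> B) \<subseteq> {S. S \<subseteq> A \<union> B \<and> card S = Suc m}"
    proof
      fix S assume "S \<in> ?f ` (?SA \<times> B)"
      then obtain T b where T: "T \<subseteq> A" "card T = m" "b \<in> B" "S = insert b T" by auto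
      have "finite T" using T assms finite_subset by auto
      moreover have "b \<notin> T" using T assms by auto
      ultimately show "S \<in> {S. S \<subseteq> A \<union> B \<and> card S = Suc m}" using T by auto
    qed
  qed (auto intro!: prod_nonneg)
  finally show ?thesis by (simp add: es_def)
qed



lemma lower_es:
  assumes m: "1 \<le> m" "m \<le> n"
  shows "(harm (n div m) / real m) ^ m \<le> es {1..n} m"
proof -
  define q where "q = n div m"
  define Bl where "Bl i = (\<lambda>j. i + j * m + 1) ` {..<q}" for i
  have qm: "q * m \<le> n" unfolding q_def by (simp add: div_times_less_eq_dividend)
  have sub: "Bl i \<subseteq> {1..n}" if "i < m" for i
  proof
    fix x assume "x \<in> Bl i"
    then obtain j where j: "j < q" "x = i + j * m + 1" unfolding Bl_def by auto
    have "Suc j * m \<le> q * m" using j by (intro mult_right_mono) auto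
    hence "x \<le> q * m" using j that by simp
    thus "x \<in> {1..n}" using qm j by auto
  qed
  have res: "(x - 1) mod m = i" if "x \<in> Bl i" "i < m" for x i
    using that unfolding Bl_def by auto
  have disj: "Bl i \<inter> Bl i' = {}" if "i < m" "i' < m" "i \<noteq> i'" for i i'
    using res that by blast
  have hs: "harm q / real m \<le> (\<Sum>k\<in>Bl i. 1 / real k)" if "i < m" for i
  proof -
    have inj: "inj_on (\<lambda>j. i + j * m + 1) {..<q}" using m by (auto simp: inj_on_def)
    have "(\<Sum>k\<in>Bl i. 1 / real k) = (\<Sum>j<q. 1 / real (i + j * m + 1))"
      unfolding Bl_def by (subst sum.reindex[OF inj]) auto
    also have "\<dots> \<ge> (\<Sum>j<q. 1 / (real m * real (Suc j)))"
    proof (rule sum_mono)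
      fix j assume "j \<in> {..<q}"
      have "real (i + j * m + 1) \<le> real m * real (Suc j)"
        using that by (simp add: algebra_simps)
      thus "1 / (real m * real (Suc j)) \<le> 1 / real (i + j * m + 1)"
        using m by (intro divide_left_mono mult_pos_pos) (auto intro: add_pos_nonneg)
    qed
    also have "(\<Sum>j<q. 1 / (real m * real (Suc j))) = harm q / real m"
      by (simp add: harm_altdef sum_divide_distrib field_simps)
    finally show ?thesis .
  qed
  have ind: "p \<le> m \<Longrightarrow> (harm q / real m) ^ p \<le> es (\<Union>i<p. Bl i) p" for p
  proof (induction p)
    case 0 then show ?case by (simp add: es_zero)
  next
    case (Suc p)
    have fin: "finite (\<Union>i<p. Bl i)" "finite (Bl p)" unfolding Bl_def by auto
    have dj: "(\<Union>i<p. Bl i) \<inter> Bl p = {}" proof -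
      have "Bl i \<inter> Bl p = {}" if "i < p" for i using disj[of i p] that Suc.prems by simp
      thus ?thesis by blast
    qed
    have "(harm q / real m) ^ Suc p = (harm q / real m) ^ p * (harm q / real m)" by simp
    also have "\<dots> \<le> es (\<Union>i<p. Bl i) p * (\<Sum>k\<in>Bl p. 1 / real k)"
      using Suc hs[of p] by (intro mult_mono) (auto intro: es_nonneg harm_nonneg divide_nonneg_nonneg)
    also have "\<dots> \<le> es ((\<Union>i<p. Bl i) \<union> Bl p) (Suc p)"
      by (rule es_union[OF fin dj])
    also have "(\<Union>i<p. Bl i) \<union> Bl p = (\<Union>i<Suc p. Bl i)" by (auto simp: lessThan_Suc)
    finally show ?case .
  qed
  have "(harm q / real m) ^ m \<le> es (\<Union>i<m. Bl i) m" by (rule ind) simp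
  also have "\<dots> \<le> es {1..n} m" using sub by (intro es_mono) auto
  finally show ?thesis unfolding q_def .
qed



lemma upper_t:
  fixes t :: real assumes "0 < t"
  shows "real (stirling (Suc n) (Suc m)) \<le> (\<Prod>k=1..n. real k + t) / t ^ m"
  using upper_core[of t m n] assms by (simp add: field_simps mult.commute)

lemma harm_le_ln: "1 \<le> n \<Longrightarrow> harm n \<le> 1 + ln (real n)"
  using euler_mascheroni_sequence_decreasing[of 1 n] by (simp add: harm_def)

lemma upper_bound:
  assumes m: "1 \<le> m" "m \<le> n"
  shows "real (stirling (n + 1) (m + 1))
        \<le> fact n * ((exp 8 / real m) * max 1 (ln (real n / real m))) ^ m"
proof -
  define L where "L = max 1 (ln (real n / real m))"
  define r where "r = real n / real m"
  have mpos: "real m > 0" using m by simp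
  have r1: "r \<ge> 1" using m unfolding r_def by simp
  have L1: "L \<ge> 1" unfolding L_def by simp
  have lnr: "ln r \<le> L" unfolding L_def r_def by simp
  have lnL: "ln L \<le> L - 1" using L1 by (intro ln_le_minus_one) auto
  have RHS: "fact n * ((exp 8 / real m) * L) ^ m = fact n * (exp 8) ^ m * (L / real m) ^ m"
    by (simp add: power_mult_distrib field_simps)
  show ?thesis
  proof (cases "L \<le> real m")
    case True
    define s where "s = nat \<lceil>real m / L\<rceil>"
    have s1: "real m / L \<le> real s" unfolding s_def by linarith
    have q0: "0 \<le> real m / L" using L1 by simp
    have "real s = real_of_int \<lceil>real m / L\<rceil>" unfolding s_def using q0 by simp
    hence s2: "real s < real m / L + 1" by linarith
    have spos: "real s > 0" using s1 mpos L1 by (smt (verit) divide_pos_pos)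
    have Qs: "(\<Prod>k=1..n. real k + real s) \<le> fact n * (exp 1 * (real n + real s) / real s) ^ s"
    proof -
      have fs: "(fact s :: real) > 0" by simp
      have "(\<Prod>k=1..n. real k + real s) = fact (n + s) / fact s"
        using Q_fact[where n=n and s=s] fs by (simp add: field_simps)
      also have "\<dots> \<le> fact n * (real n + real s) ^ s / fact s"
        using fact_add_le[of n s] fs by (intro divide_right_mono) auto
      also have "\<dots> \<le> fact n * (real n + real s) ^ s * (exp (real s) / real s ^ s)"
      proof -
        have "1 / fact s \<le> exp (real s) / real s ^ s"
          using pow_le_exp_fact[of s] fs spos by (simp add: field_simps)
        thus ?thesis by (simp add: mult_left_mono divide_inverse)
      qed
      also have "\<dots> = fact n * (exp 1 * (real n + real s) / real s) ^ s"
      proof -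
        have "exp (real s) = exp 1 ^ s" using exp_of_nat_mult[of s 1] by simp
        thus ?thesis by (simp add: power_mult_distrib power_divide)
      qed
      finally show ?thesis .
    qed
    define x where "x = exp 1 * (real n + real s) / real s"
    have xpos: "x > 0" unfolding x_def using spos by simp
    have lnx: "ln x \<le> 1 + 2 * L"
    proof -
      have "(real n + real s) / real s = real n / real s + 1" using spos by (simp add: field_simps)
      also have "real n / real s \<le> real n / (real m / L)"
        using s1 mpos L1 spos by (intro divide_left_mono) auto
      also have "real n / (real m / L) = r * L" unfolding r_def using L1 by simp
      finally have a: "(real n + real s) / real s \<le> r * L + 1" by simp
      have "1 * 1 \<le> r * L" using r1 L1 by (intro mult_mono) auto
      hence b: "r * L + 1 \<le> 2 * (r * L)" by linarith
      have pos: "(real n + real s) / real s > 0" using spos by simp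
      have "ln ((real n + real s) / real s) \<le> ln (2 * (r * L))"
      proof -
        have ab: "(real n + real s) / real s \<le> 2 * (r * L)" using a b by linarith
        show ?thesis using ab pos by (rule ln_mono)
      qed
      also have "\<dots> = ln 2 + ln r + ln L" using r1 L1 by (simp add: ln_mult)
      also have "\<dots> \<le> 1 + L + (L - 1)" using lnr lnL ln_2_less_1 by linarith
      finally have "ln ((real n + real s) / real s) \<le> 2 * L" by simp
      moreover have "ln x = 1 + ln ((real n + real s) / real s)"
      proof -
        have xeq: "x = exp 1 * ((real n + real s) / real s)" unfolding x_def by simp
        have "ln x = ln (exp 1) + ln ((real n + real s) / real s)"
          unfolding xeq using pos by (intro ln_mult_pos) auto
        thus ?thesis by simp
      qed
      ultimately show ?thesis by simp
    qed
    have lnx0: "ln x \<ge> 0"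
    proof -
      have pos: "(real n + real s) / real s > 0" using spos by simp
      have xeq: "x = exp 1 * ((real n + real s) / real s)" unfolding x_def by simp
      have "ln x = ln (exp 1) + ln ((real n + real s) / real s)"
        unfolding xeq using pos by (intro ln_mult_pos) auto
      moreover have "1 \<le> (real n + real s) / real s" using spos by (simp add: le_divide_eq)
      ultimately show ?thesis by simp
    qed
    have xs: "x ^ s \<le> (exp 8) ^ m"
    proof -
      have "x ^ s = exp (real s * ln x)" using xpos by (simp add: exp_of_nat_mult)
      also have "real s * ln x \<le> (real m / L + 1) * (1 + 2 * L)"
        using s2 lnx lnx0 spos L1 by (intro mult_mono) auto
      also have "(real m / L + 1) * (1 + 2 * L) = real m / L + 2 * real m + 1 + 2 * L"
        using L1 by (simp add: field_simps)
      also have "\<dots> \<le> 8 * real m"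
      proof -
        have "real m / L \<le> real m" using L1 mpos by (simp add: divide_le_eq)
        thus ?thesis using True m by simp
      qed
      finally have "x ^ s \<le> exp (8 * real m)" by simp
      also have "exp (8 * real m) = exp 8 ^ m" by (simp add: exp_of_nat_mult[symmetric] mult.commute)
      finally show ?thesis .
    qed
    have sm: "1 / real s ^ m \<le> (L / real m) ^ m"
    proof -
      have "(real m / L) ^ m \<le> real s ^ m" using s1 mpos L1 by (intro power_mono) auto
      hence "1 / real s ^ m \<le> 1 / (real m / L) ^ m"
        using mpos L1 spos by (intro divide_left_mono mult_pos_pos zero_less_power divide_pos_pos) auto
      thus ?thesis by (simp add: power_divide)
    qed
    have "real (stirling (n + 1) (m + 1)) \<le> (\<Prod>k=1..n. real k + real s) / real s ^ m"
      using upper_t[OF spos, of n m] by simp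
    also have "\<dots> \<le> fact n * x ^ s * (1 / real s ^ m)"
      using Qs spos unfolding x_def by (simp add: divide_right_mono)
    also have "\<dots> \<le> fact n * (exp 8) ^ m * (L / real m) ^ m"
      using xs sm xpos by (intro mult_mono mult_left_mono) auto
    finally show ?thesis using RHS L_def by simp
  next
    case False
    have npos: "n \<ge> 1" using m by simp
    have hpos: "harm n > (0::real)" using npos by simp
    define t where "t = real m / harm n"
    have tpos: "t > 0" unfolding t_def using hpos mpos by simp
    have h3: "harm n \<le> 3 * L"
    proof -
      have "ln (real n) = ln r + ln (real m)" unfolding r_def using mpos npos by (simp add: ln_div)
      also have "ln (real m) \<le> real m - 1" using mpos by (intro ln_le_minus_one) auto
      finally have "ln (real n) \<le> L + real m" using lnr by simp
      thus ?thesis using harm_le_ln[OF npos] False L1 by simp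
    qed
    have "real (stirling (n + 1) (m + 1)) \<le> (\<Prod>k=1..n. real k + t) / t ^ m"
      using upper_t[OF tpos, of n m] by simp
    also have "\<dots> \<le> fact n * exp (t * harm n) / t ^ m"
      using Q_exp[of t n] tpos by (intro divide_right_mono) auto
    also have "\<dots> = fact n * (exp 1 * harm n / real m) ^ m"
      unfolding t_def using hpos mpos
      by (simp add: exp_of_nat_mult[symmetric] power_divide power_mult_distrib field_simps)
    also have "\<dots> \<le> fact n * (exp 8 * L / real m) ^ m"
    proof -
      have e7: "exp (7::real) \<ge> 3" using exp_ge_add_one_self[of 7] by simp
      have "exp 1 * harm n \<le> exp 1 * (3 * L)" using h3 by simp
      also have "\<dots> \<le> exp 1 * exp 7 * L" using e7 L1 by simp
      also have "exp 1 * exp 7 = exp (8::real)" by (simp add: exp_add[symmetric])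
      finally have "exp 1 * harm n \<le> exp 8 * L" .
      thus ?thesis using hpos mpos
        by (intro mult_left_mono power_mono divide_right_mono) (auto intro!: divide_nonneg_nonneg mult_nonneg_nonneg harm_nonneg)
    qed
    also have "\<dots> = fact n * (exp 8) ^ m * (L / real m) ^ m"
      by (simp add: power_mult_distrib field_simps)
    finally show ?thesis using RHS L_def by simp
  qed
qed



lemma lower_bound:
  assumes m: "1 \<le> m" "m \<le> n"
  shows "fact n * ((1 / real m) * max 1 (ln (real n / real m))) ^ m
        \<le> real (stirling (n + 1) (m + 1))"
proof -
  define q where "q = n div m"
  have mpos: "real m > 0" using m by simp
  have q1: "1 \<le> q" unfolding q_def using m div_le_mono[of m n m] by simp
  have "harm 1 \<le> (harm q :: real)" by (rule harm_mono[OF q1])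
  hence h1: "1 \<le> (harm q :: real)" by (simp add: harm_def)
  have nq: "real n / real m \<le> real q + 1"
  proof -
    have "n = q * m + n mod m" unfolding q_def by simp
    hence "real n = real q * real m + real (n mod m)" by (metis of_nat_add of_nat_mult)
    moreover have "real (n mod m) \<le> real m" using m by simp
    ultimately have "real n \<le> (real q + 1) * real m" by (simp add: algebra_simps)
    thus ?thesis using mpos by (simp add: divide_le_eq)
  qed
  have h2: "ln (real n / real m) \<le> harm q"
  proof -
    have "ln (real n / real m) \<le> ln (real q + 1)"
      using nq m by (intro ln_mono) auto
    also have "\<dots> \<le> harm q" by (rule harm_ge_ln)
    finally show ?thesis .
  qed
  have "((1 / real m) * max 1 (ln (real n / real m))) ^ m \<le> (harm q / real m) ^ m"
    using h1 h2 mpos by (intro power_mono) (auto simp: divide_right_mono)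
  also have "\<dots> \<le> es {1..n} m" unfolding q_def by (rule lower_es[OF m])
  finally have "fact n * ((1 / real m) * max 1 (ln (real n / real m))) ^ m \<le> fact n * es {1..n} m"
    by (intro mult_left_mono) auto
  also have "\<dots> = real (stirling (n + 1) (m + 1))" using stirling_es[of n m] by simp
  finally show ?thesis .
qed

theorem lemma4:
  shows "\<exists>c C :: real. 0 < c \<and> c \<le> C \<and>
    (\<forall>m n :: nat. 1 \<le> m \<and> m \<le> n \<longrightarrow>
      fact n * ((c / real m) * max 1 (ln (real n / real m))) ^ m
        \<le> real (stirling (n + 1) (m + 1)) \<and>
      real (stirling (n + 1) (m + 1))
        \<le> fact n * ((C / real m) * max 1 (ln (real n / real m))) ^ m)"
proof -
  have "\<forall>m n :: nat. 1 \<le> m \<and> m \<le> n \<longrightarrow>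
      fact n * ((1 / real m) * max 1 (ln (real n / real m))) ^ m
        \<le> real (stirling (n + 1) (m + 1)) \<and>
      real (stirling (n + 1) (m + 1))
        \<le> fact n * ((exp 8 / real m) * max 1 (ln (real n / real m))) ^ m"
    using lower_bound upper_bound by blast
  moreover have "(0::real) < 1" "(1::real) \<le> exp 8" by auto
  ultimately show ?thesis by blast
qed


end
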